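(* Let $a,b\in C\ell_2$. Then (1) $L(a)L(a^+)L(a)=L(a)$, $L(a^+)L(a)L(a^+)=L(a^+)$, $L(a)L(a^+)=(L(a)L(a^+))^T$, $L(a^+)L(a)=(L(a^+)L(a))^T$; (2) $R(a)R(a^+)R(a)=R(a)$, $R(a^+)R(a)R(a^+)=R(a^+)$, $R(a)R(a^+)=(R(a)R(a^+))^T$, $R(a^+)R(a)=(R(a^+)R(a))^T$; (3) $(L(a)R(b))^+=L(a^+)R(b^+)$, where the left side is the Moore–Penrose inverse of the real matrix $L(a)R(b)$.
   Context: $C\ell_2$ is the 4-dimensional real associative algebra with basis $1,e_1,e_2,e_3$ and multiplication $e_1^2=e_2^2=1$, $e_3^2=-1$, $e_1e_2=e_3=-e_2e_1$, $e_1e_3=e_2=-e_3e_1$, $e_3e_2=e_1=-e_2e_3$. For $a=a_0+a_1e_1+a_2e_2+a_3e_3$ ($a_i\in\mathbb{R}$): $\bar a=a_0-a_1e_1-a_2e_2-a_3e_3$, $a'=a_0+a_1e_1+a_2e_2-a_3e_3$, $H_a=a_0^2-a_1^2-a_2^2+a_3^2$, $$L(a)=\begin{pmatrix} a_0&a_1&a_2&-a_3\\ a_1&a_0&a_3&-a_2\\ a_2&-a_3&a_0&a_1\\ a_3&-a_2&a_1&a_0\end{pmatrix},\qquad R(a)=\begin{pmatrix} a_0&a_1&a_2&-a_3\\ a_1&a_0&-a_3&a_2\\ a_2&a_3&a_0&-a_1\\ a_3&a_2&-a_1&a_0\end{pmatrix}$$ (matrices of $x\mapsto ax$ and $x\mapsto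 xa$ in coordinates $(x_0,x_1,x_2,x_3)^T$). The element $a^+$ is defined by $a^+=0$ if $a=0$, $a^+=\bar a/H_a$ if $H_a\neq0$, and $a^+=a'/(4(a_0^2+a_3^2))$ if $H_a=0$, $a\neq 0$. The Moore–Penrose inverse $A^+$ of a real matrix $A$ is the unique $X$ with $AXA=A$, $XAX=X$, $(AX)^T=AX$, $(XA)^T=XA$. *)

theory Defs
  imports "HOL-Analysis.Analysis"
begin

text \<open>Elements a = a0 + a1 e1 + a2 e2 + a3 e3 of the real Clifford algebra Cl_2,
  represented by their four real coordinates.\<close>
datatype cl2 = Cl2 (c0: real) (c1: real) (c2: real) (c3: real)

definition cl2_zero :: cl2 where "cl2_zero = Cl2 0 0 0 0"

definition cl2_scale :: "real \<Rightarrow> cl2 \<Rightarrow> cl2" where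
  "cl2_scale r a = Cl2 (r * c0 a) (r * c1 a) (r * c2 a) (r * c3 a)"

definition cl2_bar :: "cl2 \<Rightarrow> cl2" where
  "cl2_bar a = Cl2 (c0 a) (- c1 a) (- c2 a) (- c3 a)"

definition cl2_prime :: "cl2 \<Rightarrow> cl2" where
  "cl2_prime a = Cl2 (c0 a) (c1 a) (c2 a) (- c3 a)"

definition cl2_H :: "cl2 \<Rightarrow> real" where
  "cl2_H a = (c0 a)^2 - (c1 a)^2 - (c2 a)^2 + (c3 a)^2"

definition cl2_plus :: "cl2 \<Rightarrow> cl2" where
  "cl2_plus a =
     (if a = cl2_zero then cl2_zero
      else if cl2_H a \<noteq> 0 then cl2_scale (1 / cl2_H a) (cl2_bar a)
      else cl2_scale (1 / (4 * ((c0 a)^2 + (c3 a)^2))) (cl2_prime a))"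

text \<open>Left and right multiplication matrices (rows listed top to bottom).\<close>
definition Lmat :: "cl2 \<Rightarrow> real^4^4" where
  "Lmat a = (case a of Cl2 a0 a1 a2 a3 \<Rightarrow>
     vector [vector [a0, a1, a2, -a3],
             vector [a1, a0, a3, -a2],
             vector [a2, -a3, a0, a1],
             vector [a3, -a2, a1, a0]])"

definition Rmat :: "cl2 \<Rightarrow> real^4^4" where
  "Rmat a = (case a of Cl2 a0 a1 a2 a3 \<Rightarrow>
     vector [vector [a0, a1, a2, -a3],
             vector [a1, a0, -a3, a2],
             vector [a2, a3, a0, -a1],
             vector [a3, a2, -a1, a0]])"

definition is_mp_inverse :: "real^'n^'n \<Rightarrow> real^'n^'n \<Rightarrow> bool" where
  "is_mp_inverse A X \<longleftrightarrow>
     A ** X ** A = A \<and> X ** A ** X = X \<and>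
     transpose (A ** X) = A ** X \<and> transpose (X ** A) = X ** A"

definition mp_inverse :: "real^'n^'n \<Rightarrow> real^'n^'n" where
  "mp_inverse A = (THE X. is_mp_inverse A X)"

end

theory Submission
  imports Defs
begin
lemma vector_4 [simp]:
 "(vector [x,y,z,w] ::('a::zero)^4)$1 = x"
 "(vector [x,y,z,w] ::('a::zero)^4)$2 = y"
 "(vector [x,y,z,w] ::('a::zero)^4)$3 = z"
 "(vector [x,y,z,w] ::('a::zero)^4)$4 = w"
  unfolding vector_def by simp_all

definition cl2_mul :: "cl2 \<Rightarrow> cl2 \<Rightarrow> cl2" where
 "cl2_mul a b = (case a of Cl2 a0 a1 a2 a3 \<Rightarrow> case b of Cl2 b0 b1 b2 b3 \<Rightarrow>
    Cl2 (a0*b0 + a1*b1 + a2*b2 - a3*b3)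
        (a0*b1 + a1*b0 - a2*b3 + a3*b2)
        (a0*b2 + a2*b0 + a1*b3 - a3*b1)
        (a0*b3 + a3*b0 + a1*b2 - a2*b1))"

lemma L_mul: "Lmat a ** Lmat b = Lmat (cl2_mul a b)"
  by (cases a; cases b) (simp add: Lmat_def cl2_mul_def vec_eq_iff forall_4 matrix_matrix_mult_def sum_4 algebra_simps)
lemma R_mul: "Rmat a ** Rmat b = Rmat (cl2_mul b a)"
  by (cases a; cases b) (simp add: Rmat_def cl2_mul_def vec_eq_iff forall_4 matrix_matrix_mult_def sum_4 algebra_simps)
lemma LR_comm: "Lmat a ** Rmat b = Rmat b ** Lmat a"
  by (cases a; cases b) (simp add: Lmat_def Rmat_def vec_eq_iff forall_4 matrix_matrix_mult_def sum_4 algebra_simps)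
lemma L_tr: "transpose (Lmat a) = Lmat (cl2_prime a)"
  by (cases a) (simp add: Lmat_def cl2_prime_def vec_eq_iff forall_4 transpose_def)
lemma R_tr: "transpose (Rmat a) = Rmat (cl2_prime a)"
  by (cases a) (simp add: Rmat_def cl2_prime_def vec_eq_iff forall_4 transpose_def)
lemma mul_assoc: "cl2_mul (cl2_mul a b) c = cl2_mul a (cl2_mul b c)"
  by (cases a; cases b; cases c) (simp add: cl2_mul_def algebra_simps)

lemma deg:
  fixes a0 a1 a2 a3 k :: real
  assumes H: "a0^2 + a3^2 = a1^2 + a2^2" and k: "k * (4 * (a0^2 + a3^2)) = 1"
  defines "a \<equiv> Cl2 a0 a1 a2 a3" and "p \<equiv> Cl2 (k*a0) (k*a1) (k*a2) (-(k*a3))"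
  shows "cl2_mul (cl2_mul a p) a = a \<and> cl2_mul (cl2_mul p a) p = p
    \<and> cl2_prime (cl2_mul a p) = cl2_mul a p \<and> cl2_prime (cl2_mul p a) = cl2_mul p a"
  unfolding a_def p_def cl2_mul_def cl2_prime_def
  apply (simp only: cl2.case cl2.inject cl2.sel)
  apply (intro conjI)
  using H k by algebra+

lemma nondeg:
  fixes a0 a1 a2 a3 k :: real
  assumes k: "k * (a0^2 - a1^2 - a2^2 + a3^2) = 1"
  defines "a \<equiv> Cl2 a0 a1 a2 a3" and "p \<equiv> Cl2 (k*a0) (-(k*a1)) (-(k*a2)) (-(k*a3))"
  shows "cl2_mul (cl2_mul a p) a = a \<and> cl2_mul (cl2_mul p a) p = p
    \<and> cl2_prime (cl2_mul a p) = cl2_mul a p \<and> cl2_prime (cl2_mul p a) = cl2_mul p a"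
  unfolding a_def p_def cl2_mul_def cl2_prime_def
  apply (simp only: cl2.case cl2.inject cl2.sel)
  apply (intro conjI)
  using k by algebra+
lemma plus_props:
  fixes a :: cl2
  shows "cl2_mul (cl2_mul a (cl2_plus a)) a = a \<and> cl2_mul (cl2_mul (cl2_plus a) a) (cl2_plus a) = cl2_plus a
    \<and> cl2_prime (cl2_mul a (cl2_plus a)) = cl2_mul a (cl2_plus a) \<and> cl2_prime (cl2_mul (cl2_plus a) a) = cl2_mul (cl2_plus a) a"
proof (cases a)
  case (Cl2 a0 a1 a2 a3)
  consider "a = cl2_zero" | "a \<noteq> cl2_zero" "cl2_H a \<noteq> 0" | "a \<noteq> cl2_zero" "cl2_H a = 0" by blast
  then show ?thesis
  proof cases
    case 1 then show ?thesis by (simp add: cl2_plus_def cl2_zero_def cl2_mul_def cl2_prime_def)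
  next
    case 2
    define k where "k = 1 / (a0^2 - a1^2 - a2^2 + a3^2)"
    have H: "a0^2 - a1^2 - a2^2 + a3^2 \<noteq> 0" using 2 Cl2 by (simp add: cl2_H_def)
    then have k: "k * (a0^2 - a1^2 - a2^2 + a3^2) = 1" by (simp add: k_def)
    have "cl2_plus a = Cl2 (k*a0) (-(k*a1)) (-(k*a2)) (-(k*a3))"
      using 2 Cl2 by (simp add: cl2_plus_def cl2_scale_def cl2_bar_def cl2_H_def k_def)
    then show ?thesis using nondeg[OF k] Cl2 by simp
  next
    case 3
    define k where "k = 1 / (4 * (a0^2 + a3^2))"
    have H: "a0^2 + a3^2 = a1^2 + a2^2" using 3 Cl2 by (simp add: cl2_H_def)
    have s: "a0^2 + a3^2 \<noteq> 0"
    proof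
      assume z: "a0^2 + a3^2 = 0"
      then have "a0 = 0" "a3 = 0" by (simp_all add: sum_power2_eq_zero_iff)
      moreover have "a1 = 0" "a2 = 0" using z H by (simp_all add: sum_power2_eq_zero_iff)
      ultimately show False using 3 Cl2 by (simp add: cl2_zero_def)
    qed
    then have s4: "4 * (a0^2 + a3^2) \<noteq> 0" by (metis mult_eq_0_iff zero_neq_numeral)
    have k: "k * (4 * (a0^2 + a3^2)) = 1" unfolding k_def using s4 by (metis divide_self_if times_divide_eq_left mult_1)
    have "cl2_plus a = Cl2 (k*a0) (k*a1) (k*a2) (-(k*a3))"
      using 3 Cl2 by (simp add: cl2_plus_def cl2_scale_def cl2_prime_def k_def)
    then show ?thesis using deg[OF H k] Cl2 by simp
  qed
qed

lemma mp_unique: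
  fixes A X Y :: "real^'n^'n"
  assumes X: "is_mp_inverse A X" and Y: "is_mp_inverse A Y"
  shows "X = Y"
proof -
  have x1: "A ** X ** A = A" and x2: "X ** A ** X = X" and x3: "transpose (A ** X) = A ** X"
    and x4: "transpose (X ** A) = X ** A" using X by (auto simp: is_mp_inverse_def)
  have y1: "A ** Y ** A = A" and y2: "Y ** A ** Y = Y" and y3: "transpose (A ** Y) = A ** Y"
    and y4: "transpose (Y ** A) = Y ** A" using Y by (auto simp: is_mp_inverse_def)
  have tA1: "transpose A = transpose A ** A ** Y"
  proof -
    have "transpose A = transpose (A ** Y ** A)" using y1 by simp
    also have "\<dots> = transpose A ** transpose (A ** Y)" by (simp add: matrix_transpose_mul)
    also have "\<dots> = transpose A ** A ** Y" using y3 by (simp add: matrix_mul_assoc)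
    finally show ?thesis .
  qed
  have tA2: "transpose A = X ** A ** transpose A"
  proof -
    have "transpose A = transpose (A ** X ** A)" using x1 by simp
    also have "\<dots> = transpose (X ** A) ** transpose A" by (simp add: matrix_transpose_mul matrix_mul_assoc)
    also have "\<dots> = X ** A ** transpose A" using x4 by simp
    finally show ?thesis .
  qed
  have "X = X ** transpose (A ** X)" using x2 x3 by (simp add: matrix_mul_assoc)
  also have "\<dots> = X ** transpose X ** transpose A" by (simp add: matrix_transpose_mul matrix_mul_assoc)
  also have "\<dots> = X ** transpose X ** (transpose A ** A ** Y)" using tA1 by simp
  also have "\<dots> = X ** transpose (A ** X) ** A ** Y" by (simp add: matrix_transpose_mul matrix_mul_assoc)
  also have "\<dots> = X ** A ** Y" using x2 x3 by (simp add: matrix_mul_assoc)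
  finally have eX: "X = X ** A ** Y" .
  have "Y = transpose (Y ** A) ** Y" using y2 y4 by simp
  also have "\<dots> = transpose A ** transpose Y ** Y" by (simp add: matrix_transpose_mul)
  also have "\<dots> = (X ** A ** transpose A) ** transpose Y ** Y" using tA2 by simp
  also have "\<dots> = X ** A ** transpose (Y ** A) ** Y" by (simp add: matrix_transpose_mul matrix_mul_assoc)
  also have "\<dots> = X ** A ** (Y ** A ** Y)" using y4 by (simp add: matrix_mul_assoc)
  also have "\<dots> = X ** A ** Y" using y2 by simp
  finally show ?thesis using eX by simp
qed

lemma LR_prod: "(Lmat u ** Rmat v) ** (Lmat w ** Rmat z) = Lmat (cl2_mul u w) ** Rmat (cl2_mul z v)"
proof -
  have "(Lmat u ** Rmat v) ** (Lmat w ** Rmat z) = Lmat u ** (Rmat v ** Lmat w) ** Rmat z"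
    by (simp add: matrix_mul_assoc)
  also have "\<dots> = Lmat u ** (Lmat w ** Rmat v) ** Rmat z" by (simp add: LR_comm)
  also have "\<dots> = (Lmat u ** Lmat w) ** (Rmat v ** Rmat z)" by (simp add: matrix_mul_assoc)
  finally show ?thesis by (simp add: L_mul R_mul)
qed

lemma LR_tr: "transpose (Lmat u ** Rmat v) = Lmat (cl2_prime u) ** Rmat (cl2_prime v)"
  by (simp add: matrix_transpose_mul L_tr R_tr LR_comm)

theorem proposition4p1:
  fixes a b :: cl2
  shows "Lmat a ** Lmat (cl2_plus a) ** Lmat a = Lmat a
       \<and> Lmat (cl2_plus a) ** Lmat a ** Lmat (cl2_plus a) = Lmat (cl2_plus a)
       \<and> Lmat a ** Lmat (cl2_plus a) = transpose (Lmat a ** Lmat (cl2_plus a))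
       \<and> Lmat (cl2_plus a) ** Lmat a = transpose (Lmat (cl2_plus a) ** Lmat a)
       \<and> Rmat a ** Rmat (cl2_plus a) ** Rmat a = Rmat a
       \<and> Rmat (cl2_plus a) ** Rmat a ** Rmat (cl2_plus a) = Rmat (cl2_plus a)
       \<and> Rmat a ** Rmat (cl2_plus a) = transpose (Rmat a ** Rmat (cl2_plus a))
       \<and> Rmat (cl2_plus a) ** Rmat a = transpose (Rmat (cl2_plus a) ** Rmat a)
       \<and> mp_inverse (Lmat a ** Rmat b) = Lmat (cl2_plus a) ** Rmat (cl2_plus b)"
proof -
  let ?p = "cl2_plus a" and ?q = "cl2_plus b"
  have pa: "cl2_mul (cl2_mul a ?p) a = a" "cl2_mul (cl2_mul ?p a) ?p = ?p"
    "cl2_prime (cl2_mul a ?p) = cl2_mul a ?p" "cl2_prime (cl2_mul ?p a) = cl2_mul ?p a"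
    using plus_props[of a] by auto
  have pb: "cl2_mul (cl2_mul b ?q) b = b" "cl2_mul (cl2_mul ?q b) ?q = ?q"
    "cl2_prime (cl2_mul b ?q) = cl2_mul b ?q" "cl2_prime (cl2_mul ?q b) = cl2_mul ?q b"
    using plus_props[of b] by auto
  have pa': "cl2_mul a (cl2_mul ?p a) = a" "cl2_mul ?p (cl2_mul a ?p) = ?p"
    using pa by (simp_all add: mul_assoc)
  have pb': "cl2_mul b (cl2_mul ?q b) = b" "cl2_mul ?q (cl2_mul b ?q) = ?q"
    using pb by (simp_all add: mul_assoc)
  have mp: "is_mp_inverse (Lmat a ** Rmat b) (Lmat ?p ** Rmat ?q)"
    unfolding is_mp_inverse_def LR_prod LR_tr using pa pb pa' pb' by simp
  have "mp_inverse (Lmat a ** Rmat b) = Lmat ?p ** Rmat ?q"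
    unfolding mp_inverse_def using mp mp_unique by blast
  then show ?thesis
    using pa pa'
    by (simp add: L_mul R_mul matrix_transpose_mul L_tr R_tr)
qed
end
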